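(* Let $M$ be a positive integer with $M\not\equiv0\bmod3$, $L$ a positive divisor of $M$ with $L^*>2$, and $\ell$ the number of prime factors of $L^*$. Then $J_0(L,M)=\frac16\Big(M\varphi(L^* )/L^*-\big(\tfrac{M}{3}\big)2^{\ell}\epsilon\Big)$, where $\big(\tfrac{M}{3}\big)$ is the Legendre symbol, and $\epsilon=1$ if $L^*$ has no prime factor congruent to $1\bmod3$, $\epsilon=0$ otherwise.
   Context: For a positive integer $n$, $n^*$ denotes the product of the distinct prime divisors of $n$, and $\varphi$ is Euler's totient function. For a positive integer $M$, a positive divisor $L$ of $M$ and an integer $k\ge0$, $J_k(L,M)=\sum_u u^k$, the sum over integers $u$ with $0<u<M/2$, $\gcd(u,L)=1$ and $u\equiv -M\bmod 3$. *)

theory Defs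
  imports "HOL-Number_Theory.Number_Theory"
begin

text \<open>n^*: the product of the distinct prime divisors of n (the radical).\<close>
definition rad :: "nat \<Rightarrow> nat" where
  "rad n = (\<Prod>p\<in>prime_factors n. p)"

definition J :: "nat \<Rightarrow> nat \<Rightarrow> nat \<Rightarrow> real" where
  "J k L M = (\<Sum>u\<in>{u::nat. 0 < u \<and> 2 * u < M \<and> coprime u L \<and> [int u = - int M] (mod 3)}.
       real u ^ k)"

end

theory Submission
  imports Defs
begin

definition chi :: "nat \<Rightarrow> int" where
  "chi n = (if n mod 3 = 1 then 1 else if n mod 3 = 2 then -1 else 0)"

lemma mod3_cases: "\<not> 3 dvd (M::nat) \<Longrightarrow> M mod 3 = 1 \<or> M mod 3 = 2" by presburger

lemma chi_mult: "chi (a*b) = chi a * chi b"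
proof -
  have h: "(a*b) mod 3 = ((a mod 3) * (b mod 3)) mod 3" by (metis mod_mult_eq)
  have "a mod 3 = 0 \<or> a mod 3 = 1 \<or> a mod 3 = 2" by linarith
  moreover have "b mod 3 = 0 \<or> b mod 3 = 1 \<or> b mod 3 = 2" by linarith
  ultimately show ?thesis unfolding chi_def h
    by (elim disjE) simp_all
qed

lemma Legendre3: assumes "\<not> 3 dvd M" shows "Legendre (int M) 3 = chi M"
proof -
  have nz: "\<not> [int M = 0] (mod 3)" using assms
    by (simp add: cong_0_iff) (metis int_dvd_int_iff of_nat_numeral)
  have sq: "(y^2) mod 3 \<in> {0,1}" for y :: int
  proof -
    have h: "y^2 mod 3 = ((y mod 3)^2) mod 3" by (metis power_mod)
    have "y mod 3 = 0 \<or> y mod 3 = 1 \<or> y mod 3 = 2" by linarith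
    then show ?thesis unfolding h by (elim disjE) simp_all
  qed
  have M3: "M mod 3 = 1 \<or> M mod 3 = 2" using assms by (rule mod3_cases)
  show ?thesis
  proof (cases "M mod 3 = 1")
    case True
    have "int M mod 3 = 1" using True by (metis of_nat_1 of_nat_mod of_nat_numeral)
    hence "[1^2 = int M] (mod 3)" unfolding cong_def by simp
    hence "QuadRes 3 (int M)" unfolding QuadRes_def by blast
    thus ?thesis using nz True by (simp add: Legendre_def chi_def)
  next
    case False
    hence M2: "M mod 3 = 2" using M3 by simp
    have "\<not> QuadRes 3 (int M)"
    proof
      assume "QuadRes 3 (int M)"
      then obtain y where "[y^2 = int M] (mod 3)" unfolding QuadRes_def by blast
      hence "y^2 mod 3 = int M mod 3" by (simp add: cong_def)
      also have "\<dots> = 2" using M2 by (metis of_nat_mod of_nat_numeral)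
      finally show False using sq[of y] by auto
    qed
    thus ?thesis using nz M2 by (simp add: Legendre_def chi_def)
  qed
qed

definition C :: "nat set \<Rightarrow> nat \<Rightarrow> nat" where
  "C P M = card {u. 0 < u \<and> 2*u < M \<and> (\<forall>p\<in>P. \<not> p dvd u) \<and> 3 dvd (u + M)}"

lemma card_gen:
  assumes k: "\<And>k. 2*(3*k+c) < M \<longleftrightarrow> k < n" and c: "c = 1 \<or> c = 2"
    and m: "\<And>u. 3 dvd (u+M) \<longleftrightarrow> u mod 3 = c"
  shows "card {u. 0 < u \<and> 2*u < M \<and> 3 dvd (u + M)} = n"
proof -
  have eq: "{u. 0 < u \<and> 2*u < M \<and> 3 dvd (u + M)} = (\<lambda>k. 3*k + c) ` {..<n}"
  proof (intro equalityI subsetI)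
    fix u assume "u \<in> {u. 0 < u \<and> 2*u < M \<and> 3 dvd (u + M)}"
    hence u: "0 < u" "2*u < M" "3 dvd (u+M)" by auto
    have um: "u mod 3 = c" using u(3) m by blast
    have ue: "u = 3*(u div 3) + c" using um by (metis div_mult_mod_eq mult.commute)
    have "u div 3 < n" using u(2) k[of "u div 3"] ue by simp
    with ue show "u \<in> (\<lambda>k. 3*k + c) ` {..<n}" by blast
  next
    fix u assume "u \<in> (\<lambda>k. 3*k + c) ` {..<n}"
    then obtain k where kk: "k < n" "u = 3*k+c" by auto
    have "u mod 3 = c" using kk(2) c by auto
    hence "3 dvd (u + M)" using m by blast
    moreover have "2*u < M" using k[of k] kk by simp
    ultimately show "u \<in> {u. 0 < u \<and> 2*u < M \<and> 3 dvd (u + M)}"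
      using kk c by auto
  qed
  show ?thesis unfolding eq by (subst card_image) (auto simp: inj_on_def)
qed

lemma C_base:
  assumes "\<not> 3 dvd M"
  shows "6 * real (C {} M) = real M - real_of_int (chi M) - (if even M then 3 else 0)"
proof -
  define q where "q = M div 6"
  define s where "s = M mod 6"
  have qs: "M = 6*q + s" unfolding q_def s_def by simp
  have s: "s = 1 \<or> s = 2 \<or> s = 4 \<or> s = 5" using assms unfolding s_def by presburger
  have C0: "C {} M = card {u. 0 < u \<and> 2*u < M \<and> 3 dvd (u + M)}" unfolding C_def by simp
  have m3: "M mod 3 = s mod 3" using qs by presburger
  have ev: "even M \<longleftrightarrow> even s" using qs by presburger
  have mM: "chi M = chi s" using m3 unfolding chi_def by simp
  from s show ?thesis
  proof (elim disjE)
    assume s1: "s = 1"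
    have "C {} M = q" unfolding C0 apply (rule card_gen[of 2])
      using qs s1 apply arith using qs s1 apply simp using qs s1 apply presburger done
    thus ?thesis using qs s1 mM ev by (simp add: chi_def)
  next
    assume s1: "s = 2"
    have "C {} M = q" unfolding C0 apply (rule card_gen[of 1])
      using qs s1 apply arith using qs s1 apply simp using qs s1 apply presburger done
    thus ?thesis using qs s1 mM ev by (simp add: chi_def)
  next
    assume s1: "s = 4"
    have "C {} M = q" unfolding C0 apply (rule card_gen[of 2])
      using qs s1 apply arith using qs s1 apply simp using qs s1 apply presburger done
    thus ?thesis using qs s1 mM ev by (simp add: chi_def)
  next
    assume s1: "s = 5"
    have "C {} M = q+1" unfolding C0 apply (rule card_gen[of 1])
      using qs s1 apply arith using qs s1 apply simp using qs s1 apply presburger done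
    thus ?thesis using qs s1 mM ev by (simp add: chi_def)
  qed
qed


lemma C_step:
  assumes p: "prime p" "p \<noteq> 3" "p \<notin> P" and P: "\<forall>q\<in>P. prime q" and pM: "p dvd M"
  shows "C (insert p P) M + C P (M div p) = C P M"
proof -
  obtain K where K: "M = p*K" using pM by blast
  have p0: "p > 0" using p(1) prime_gt_0_nat by blast
  have MK: "M div p = K" using K p0 by simp
  have n3p: "\<not> 3 dvd p" using p(1,2) primes_dvd_imp_eq[of 3 p] by auto
  define A where "A = {u. 0 < u \<and> 2*u < M \<and> (\<forall>q\<in>P. \<not> q dvd u) \<and> 3 dvd (u + M)}"
  have finA: "finite A" unfolding A_def by (rule finite_subset[of _ "{..<M}"]) auto
  have e1: "{u. 0 < u \<and> 2*u < M \<and> (\<forall>q\<in>insert p P. \<not> q dvd u) \<and> 3 dvd (u + M)} = {u\<in>A. \<not> p dvd u}"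
    unfolding A_def by auto
  have e2: "{u\<in>A. p dvd u} = (\<lambda>v. p*v) ` {v. 0 < v \<and> 2*v < K \<and> (\<forall>q\<in>P. \<not> q dvd v) \<and> 3 dvd (v + K)}"
  proof (intro equalityI subsetI)
    fix u assume "u \<in> {u\<in>A. p dvd u}"
    then obtain v where v: "u = p*v" "0 < u" "2*u < M" "\<forall>q\<in>P. \<not> q dvd u" "3 dvd (u+M)"
      unfolding A_def by auto
    have "0 < v" using v by simp
    moreover have "2*v < K" using v(1,3) K p0 by (simp add: mult.left_commute)
    moreover have "\<forall>q\<in>P. \<not> q dvd v" using v(1,4) by auto
    moreover have "3 dvd (v + K)"
    proof -
      have "3 dvd p * (v+K)" using v(1,5) K by (simp add: distrib_left)
      moreover have "prime (3::nat)" by simp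
      ultimately show ?thesis using n3p prime_dvd_mult_iff by blast
    qed
    ultimately show "u \<in> (\<lambda>v. p*v) ` {v. 0 < v \<and> 2*v < K \<and> (\<forall>q\<in>P. \<not> q dvd v) \<and> 3 dvd (v + K)}"
      using v(1) by blast
  next
    fix u assume "u \<in> (\<lambda>v. p*v) ` {v. 0 < v \<and> 2*v < K \<and> (\<forall>q\<in>P. \<not> q dvd v) \<and> 3 dvd (v + K)}"
    then obtain v where v: "u = p*v" "0 < v" "2*v < K" "\<forall>q\<in>P. \<not> q dvd v" "3 dvd (v + K)" by auto
    have "0 < u" using v p0 by simp
    moreover have "2*u < M" using v(1,3) K p0 by (simp add: mult.left_commute)
    moreover have "\<forall>q\<in>P. \<not> q dvd u"
    proof
      fix q assume q: "q \<in> P"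
      have "\<not> q dvd p" using q P p(1,3) primes_dvd_imp_eq by blast
      thus "\<not> q dvd u" using v(1,4) q P prime_dvd_mult_iff by blast
    qed
    moreover have "3 dvd (u + M)"
    proof -
      have "u + M = p * (v+K)" using v(1) K by (simp add: distrib_left)
      thus ?thesis using v(5) by simp
    qed
    ultimately show "u \<in> {u\<in>A. p dvd u}" unfolding A_def using v(1) by auto
  qed
  have inj: "inj_on (\<lambda>v. p*v) X" for X using p0 by (auto simp: inj_on_def)
  have "card A = card {u\<in>A. \<not> p dvd u} + card {u\<in>A. p dvd u}"
  proof -
    have "A = {u\<in>A. \<not> p dvd u} \<union> {u\<in>A. p dvd u}" by auto
    hence "card A = card ({u\<in>A. \<not> p dvd u} \<union> {u\<in>A. p dvd u})" by simp
    also have "\<dots> = card {u\<in>A. \<not> p dvd u} + card {u\<in>A. p dvd u}"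
      by (rule card_Un_disjoint) (use finA in auto)
    finally show ?thesis .
  qed
  thus ?thesis unfolding C_def e1 MK e2 card_image[OF inj] A_def[symmetric] by simp
qed


lemma step_alg:
  fixes a b e CM CK C' M K p xM xK xp :: real
  assumes "6*CM = M*a - xM*b - e" "6*CK = K*a - xK*b - e" "M = p*K" "p > 0"
    "xM = xp*xK" "xp*xp = 1" "C' + CK = CM"
  shows "6*C' = M*(a*(1-1/p)) - xM*(b*(1-xp))"
proof -
  have "6*C' = 6*CM - 6*CK" using assms(7) by simp
  also have "\<dots> = (M - K)*a - (xM - xK)*b" using assms(1,2) by (simp add: algebra_simps)
  also have "M - K = M*(1-1/p)" using assms(3,4) by (simp add: field_simps)
  also have "xM - xK = xM*(1-xp)" using assms(5,6) by (simp add: algebra_simps)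
  finally show ?thesis by (simp add: algebra_simps)
qed

lemma chi_prime: assumes "prime p" "p \<noteq> 3" shows "chi p * chi p = 1"
proof -
  have "\<not> 3 dvd p" using assms primes_dvd_imp_eq[of 3 p] by auto
  thus ?thesis using mod3_cases[of p] unfolding chi_def by auto
qed

lemma C_odd:
  assumes "finite P"
  shows "\<forall>M. (\<forall>p\<in>P. prime p \<and> p \<noteq> 2 \<and> p \<noteq> 3) \<longrightarrow> (\<Prod>P) dvd M \<longrightarrow> \<not> 3 dvd M \<longrightarrow>
    6 * real (C P M) = real M * (\<Prod>p\<in>P. 1 - 1/real p)
       - real_of_int (chi M) * (\<Prod>p\<in>P. 1 - real_of_int (chi p))
       - (if P = {} \<and> even M then 3 else 0)"
  using assms
proof (induction P rule: finite_induct)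
  case empty
  then show ?case using C_base by simp
next
  case (insert p F)
  show ?case
  proof (intro allI impI)
    fix M assume pr: "\<forall>q\<in>insert p F. prime q \<and> q \<noteq> 2 \<and> q \<noteq> 3"
      and dv: "\<Prod>(insert p F) dvd M" and n3: "\<not> 3 dvd M"
    have pp: "prime p" "p \<noteq> 2" "p \<noteq> 3" using pr by auto
    have p0: "p > 0" using pp(1) prime_gt_0_nat by blast
    have pr_ins: "\<Prod>(insert p F) = p * \<Prod>F" using insert(1,2) by simp
    from dv[unfolded pr_ins] obtain k0 where k0: "M = p * \<Prod>F * k0" by (rule dvdE)
    obtain k where k: "M = p * (\<Prod>F * k)" using k0 by (metis mult.assoc)
    define K where "K = \<Prod>F * k"
    have MK: "M = p*K" "M div p = K" using k p0 unfolding K_def by simp_all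
    have dvK: "\<Prod>F dvd K" unfolding K_def by simp
    have dvM: "\<Prod>F dvd M" unfolding MK(1) using dvK by simp
    have n3K: "\<not> 3 dvd K" using n3 MK(1) by auto
    have prF: "\<forall>q\<in>F. prime q \<and> q \<noteq> 2 \<and> q \<noteq> 3" using pr by auto
    have IH1: "6 * real (C F M) = real M * (\<Prod>p\<in>F. 1 - 1/real p)
       - real_of_int (chi M) * (\<Prod>p\<in>F. 1 - real_of_int (chi p)) - (if F = {} \<and> even M then 3 else 0)"
      using insert(3) prF n3 dvM by blast
    have IH2: "6 * real (C F K) = real K * (\<Prod>p\<in>F. 1 - 1/real p)
       - real_of_int (chi K) * (\<Prod>p\<in>F. 1 - real_of_int (chi p)) - (if F = {} \<and> even K then 3 else 0)"
      using insert(3) prF n3K dvK by blast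
    have "p \<ge> 2" using pp(1) prime_ge_2_nat by blast
    hence "p > 2" using pp(2) by linarith
    hence oddp: "odd p" using pp(1) prime_odd_nat by blast
    have ev: "even M \<longleftrightarrow> even K" using MK(1) oddp by simp
    have st: "C (insert p F) M + C F K = C F M"
      using C_step[of p F M] pp insert(2) prF MK by auto
    have "6 * real (C (insert p F) M) = real M * ((\<Prod>p\<in>F. 1 - 1/real p) * (1 - 1/real p))
        - real_of_int (chi M) * ((\<Prod>p\<in>F. 1 - real_of_int (chi p)) * (1 - real_of_int (chi p)))"
    proof (rule step_alg[where CM = "real (C F M)" and CK = "real (C F K)" and K = "real K"
          and xK = "real_of_int (chi K)" and e = "if F = {} \<and> even M then 3 else 0"])
      show "6 * real (C F M) = real M * (\<Prod>p\<in>F. 1 - 1/real p) - real_of_int (chi M) * (\<Prod>p\<in>F. 1 - real_of_int (chi p)) - (if F = {} \<and> even M then 3 else 0)"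
        by (rule IH1)
      show "6 * real (C F K) = real K * (\<Prod>p\<in>F. 1 - 1/real p) - real_of_int (chi K) * (\<Prod>p\<in>F. 1 - real_of_int (chi p)) - (if F = {} \<and> even M then 3 else 0)"
        using IH2 ev by simp
      show "real M = real p * real K" using MK by simp
      show "real p > 0" using p0 by simp
      show "real_of_int (chi M) = real_of_int (chi p) * real_of_int (chi K)" using MK chi_mult by simp
      show "real_of_int (chi p) * real_of_int (chi p) = 1" using chi_prime[OF pp(1,3)]
        by (metis of_int_1 of_int_mult)
      show "real (C (insert p F) M) + real (C F K) = real (C F M)" using st by (metis of_nat_add)
    qed
    thus "6 * real (C (insert p F) M) = real M * (\<Prod>p\<in>insert p F. 1 - 1/real p)
       - real_of_int (chi M) * (\<Prod>p\<in>insert p F. 1 - real_of_int (chi p))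
       - (if insert p F = {} \<and> even M then 3 else 0)"
      using insert(1,2) by (simp add: mult.commute)
  qed
qed

lemma a1: "p \<in> prime_factors (L::nat) \<Longrightarrow> prime p \<and> p dvd L" by (simp add: in_prime_factors_iff)
lemma a2: "coprime u (L::nat) \<Longrightarrow> p dvd u \<Longrightarrow> p dvd L \<Longrightarrow> p = 1"
  using coprime_common_divisor_nat by blast
lemma a3: "prime (p::nat) \<Longrightarrow> p dvd L \<Longrightarrow> L > 0 \<Longrightarrow> p \<in> prime_factors L" by (simp add: in_prime_factors_iff)
lemma a4: "\<not> coprime u (L::nat) \<Longrightarrow> \<exists>p. prime p \<and> p dvd u \<and> p dvd L"
proof -
  assume "\<not> coprime u L"
  hence g: "gcd u L \<noteq> 1" using coprime_iff_gcd_eq_1 by blast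
  obtain p where p: "prime p" "p dvd gcd u L" using prime_factor_nat[OF g] by blast
  thus ?thesis using dvd_trans[OF p(2) gcd_dvd1] dvd_trans[OF p(2) gcd_dvd2] by blast
qed
lemma L3: assumes "finite P" "\<forall>p\<in>P. prime (p::nat)" shows "prime_factors (\<Prod>P) = P"
proof -
  have "0 \<notin> id ` P" using assms(2) by auto
  hence "prime_factors (prod id P) = \<Union>((prime_factors \<circ> id) ` P)"
    using prime_factors_prod[OF assms(1)] by blast
  also have "\<dots> = \<Union>((\<lambda>p. {p}) ` P)" using assms(2) prime_prime_factors by auto
  finally show ?thesis by auto
qed
lemma L2: assumes "finite P" "\<forall>p\<in>P. prime (p::nat)" shows "totient (\<Prod>P) = (\<Prod>p\<in>P. p - 1)"
proof -
  have "pairwise coprime (id ` P)" using assms(2) by (auto simp: pairwise_def primes_coprime)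
  hence "totient (prod id P) = (\<Prod>a\<in>P. totient (id a))"
    by (rule totient_prod_coprime) simp
  also have "\<dots> = (\<Prod>p\<in>P. p - 1)" using assms(2) by (intro prod.cong) (auto simp: totient_prime)
  finally show ?thesis by simp
qed
lemma L5: "[int u = - int M] (mod 3) \<longleftrightarrow> 3 dvd (u + M)"
proof -
  have "[int u = - int M] (mod 3) \<longleftrightarrow> (3::int) dvd (int u - - int M)" by (rule cong_iff_dvd_diff)
  also have "\<dots> \<longleftrightarrow> int 3 dvd int (u+M)" by simp
  also have "\<dots> \<longleftrightarrow> 3 dvd (u+M)" by (rule int_dvd_int_iff)
  finally show ?thesis .
qed

lemma L1: assumes "(L::nat) > 0" shows "coprime u L \<longleftrightarrow> (\<forall>p\<in>prime_factors L. \<not> p dvd u)"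
proof
  assume c: "coprime u L"
  show "\<forall>p\<in>prime_factors L. \<not> p dvd u"
  proof (intro ballI notI)
    fix p assume p: "p \<in> prime_factors L" "p dvd u"
    have pp: "prime p" "p dvd L" using a1[OF p(1)] by auto
    have "p = 1" using a2[OF c p(2) pp(2)] .
    thus False using pp(1) by simp
  qed
next
  assume h: "\<forall>p\<in>prime_factors L. \<not> p dvd u"
  show "coprime u L"
  proof (rule ccontr)
    assume "\<not> coprime u L"
    then obtain p where "prime p" "p dvd u" "p dvd L" using a4 by blast
    thus False using h a3 assms by blast
  qed
qed

lemma L4:
  assumes "finite P" "\<forall>p\<in>P. prime p \<and> p \<noteq> 3"
  shows "(\<Prod>p\<in>P. 1 - real_of_int (chi p)) = 2 ^ card P * (if \<forall>p\<in>P. \<not> [p = 1] (mod 3) then 1 else 0)"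
proof -
  have m: "p mod 3 = 1 \<or> p mod 3 = 2" if "p \<in> P" for p
  proof -
    have "\<not> 3 dvd p" using assms(2) that primes_dvd_imp_eq[of 3 p] by auto
    thus ?thesis by (rule mod3_cases)
  qed
  have cg: "[p = 1] (mod 3) \<longleftrightarrow> p mod 3 = 1" for p :: nat by (simp add: cong_def)
  show ?thesis
  proof (cases "\<forall>p\<in>P. \<not> [p = 1] (mod 3)")
    case True
    have "(\<Prod>p\<in>P. 1 - real_of_int (chi p)) = (\<Prod>p\<in>P. 2)"
    proof (rule prod.cong)
      fix p assume "p \<in> P"
      hence "p mod 3 = 2" using m True cg by blast
      thus "1 - real_of_int (chi p) = 2" by (simp add: chi_def)
    qed simp
    thus ?thesis using True by simp
  next
    case False
    then obtain p where p: "p \<in> P" "p mod 3 = 1" using cg by blast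
    have "1 - real_of_int (chi p) = 0" using p(2) by (simp add: chi_def)
    hence "(\<Prod>p\<in>P. 1 - real_of_int (chi p)) = 0" using assms(1) p(1) by (metis prod_zero_iff)
    thus ?thesis using False by simp
  qed
qed

lemma C_main:
  assumes fin: "finite P" and pr: "\<forall>p\<in>P. prime p \<and> p \<noteq> 3" and dv: "\<Prod>P dvd M"
    and n3: "\<not> 3 dvd M" and big: "\<Prod>P > 2"
  shows "6 * real (C P M) = real M * (\<Prod>p\<in>P. 1 - 1/real p)
       - real_of_int (chi M) * (\<Prod>p\<in>P. 1 - real_of_int (chi p))"
proof (cases "2 \<in> P")
  case False
  have "P \<noteq> {}" using big by auto
  thus ?thesis using C_odd[OF fin] pr dv n3 False by auto
next
  case True
  define F where "F = P - {2}"
  have PF: "P = insert 2 F" "2 \<notin> F" using True unfolding F_def by auto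
  have finF: "finite F" using fin unfolding F_def by simp
  have prodP: "\<Prod>P = 2 * \<Prod>F" using PF finF by simp
  have "F \<noteq> {}" using big prodP by auto
  obtain K where K: "M = 2 * (\<Prod>F * K)" using dv unfolding prodP by (metis dvdE mult.assoc)
  define K' where "K' = \<Prod>F * K"
  have MK: "M = 2*K'" "M div 2 = K'" using K unfolding K'_def by simp_all
  have dvK: "\<Prod>F dvd K'" unfolding K'_def by simp
  have dvM: "\<Prod>F dvd M" unfolding MK(1) using dvK by simp
  have n3K: "\<not> 3 dvd K'" using n3 MK(1) by auto
  have prF: "\<forall>q\<in>F. prime q \<and> q \<noteq> 2 \<and> q \<noteq> 3" using pr PF by auto
  have IH1: "6 * real (C F M) = real M * (\<Prod>p\<in>F. 1 - 1/real p)
       - real_of_int (chi M) * (\<Prod>p\<in>F. 1 - real_of_int (chi p)) - 0"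
    using C_odd[OF finF] prF n3 dvM \<open>F \<noteq> {}\<close> by auto
  have IH2: "6 * real (C F K') = real K' * (\<Prod>p\<in>F. 1 - 1/real p)
       - real_of_int (chi K') * (\<Prod>p\<in>F. 1 - real_of_int (chi p)) - 0"
    using C_odd[OF finF] prF n3K dvK \<open>F \<noteq> {}\<close> by auto
  have st: "C (insert 2 F) M + C F K' = C F M"
    using C_step[of 2 F M] PF prF MK by auto
  have "6 * real (C (insert 2 F) M) = real M * ((\<Prod>p\<in>F. 1 - 1/real p) * (1 - 1/real (2::nat)))
        - real_of_int (chi M) * ((\<Prod>p\<in>F. 1 - real_of_int (chi p)) * (1 - real_of_int (chi 2)))"
  proof (rule step_alg[where CM = "real (C F M)" and CK = "real (C F K')" and K = "real K'"
        and xK = "real_of_int (chi K')" and e = 0])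
    show "6 * real (C F M) = real M * (\<Prod>p\<in>F. 1 - 1/real p) - real_of_int (chi M) * (\<Prod>p\<in>F. 1 - real_of_int (chi p)) - 0"
      by (rule IH1)
    show "6 * real (C F K') = real K' * (\<Prod>p\<in>F. 1 - 1/real p) - real_of_int (chi K') * (\<Prod>p\<in>F. 1 - real_of_int (chi p)) - 0"
      by (rule IH2)
    show "real M = real (2::nat) * real K'" using MK by simp
    show "real (2::nat) > 0" by simp
    show "real_of_int (chi M) = real_of_int (chi 2) * real_of_int (chi K')" using MK chi_mult by simp
    show "real_of_int (chi 2) * real_of_int (chi 2) = 1" by (simp add: chi_def)
    show "real (C (insert 2 F) M) + real (C F K') = real (C F M)" using st by (metis of_nat_add)
  qed
  thus ?thesis unfolding PF(1) using finF PF(2) by (simp add: mult.commute)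
qed


theorem propositionA4:
  fixes M L :: nat
  assumes "M > 0" and "\<not> 3 dvd M" and "L > 0" and "L dvd M" and "rad L > 2"
  shows "J 0 L M =
    (1/6) * (real M * real (totient (rad L)) / real (rad L)
      - real_of_int (Legendre (int M) 3) * 2 ^ card (prime_factors (rad L))
        * (if \<forall>p\<in>prime_factors (rad L). \<not> [p = 1] (mod 3) then 1 else 0))"
proof -
  define P where "P = prime_factors L"
  have fin: "finite P" unfolding P_def by simp
  have prP: "\<forall>p\<in>P. prime p" unfolding P_def by (auto simp: in_prime_factors_iff)
  have n3P: "3 \<notin> P"
  proof
    assume "3 \<in> P"
    hence "3 dvd L" unfolding P_def by (auto simp: in_prime_factors_iff)
    hence "3 dvd M" using assms(4) by (rule dvd_trans)
    thus False using assms(2) by simp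
  qed
  have pr: "\<forall>p\<in>P. prime p \<and> p \<noteq> 3" using prP n3P by auto
  have radP: "rad L = \<Prod>P" unfolding rad_def P_def by simp
  have pfr: "prime_factors (rad L) = P" unfolding radP using L3[OF fin prP] .
  have dvP: "\<Prod>P dvd L"
  proof -
    have "(\<Prod>p\<in>P. p) dvd (\<Prod>p\<in>P. p ^ multiplicity p L)"
    proof (rule prod_dvd_prod)
      fix p assume "p \<in> P"
      hence "multiplicity p L > 0" unfolding P_def prime_factors_multiplicity by simp
      thus "p dvd p ^ multiplicity p L" by simp
    qed
    also have "\<dots> = L" unfolding P_def using prod_prime_factors[of L] assms(3) by simp
    finally show ?thesis by simp
  qed
  have dvM: "\<Prod>P dvd M" using dvP assms(4) by (rule dvd_trans)
  have main: "6 * real (C P M) = real M * (\<Prod>p\<in>P. 1 - 1/real p)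
       - real_of_int (chi M) * (\<Prod>p\<in>P. 1 - real_of_int (chi p))"
    using C_main[OF fin pr dvM assms(2)] assms(5) radP by simp
  have JC: "J 0 L M = real (C P M)"
  proof -
    have "{u::nat. 0 < u \<and> 2 * u < M \<and> coprime u L \<and> [int u = - int M] (mod 3)}
        = {u. 0 < u \<and> 2*u < M \<and> (\<forall>p\<in>P. \<not> p dvd u) \<and> 3 dvd (u + M)}"
      using L1[OF assms(3)] L5 unfolding P_def by blast
    thus ?thesis unfolding J_def C_def by simp
  qed
  have tot: "real (totient (rad L)) / real (rad L) = (\<Prod>p\<in>P. 1 - 1/real p)"
  proof -
    have "real (totient (rad L)) / real (rad L) = (\<Prod>p\<in>P. real (p - 1)) / (\<Prod>p\<in>P. real p)"
      unfolding radP L2[OF fin prP] by simp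
    also have "\<dots> = (\<Prod>p\<in>P. real (p - 1) / real p)" by (rule prod_dividef[symmetric])
    also have "\<dots> = (\<Prod>p\<in>P. 1 - 1/real p)"
    proof (rule prod.cong)
      fix p assume "p \<in> P"
      hence "p \<ge> 1" using prP prime_ge_1_nat by blast
      thus "real (p - 1) / real p = 1 - 1/real p" by (simp add: of_nat_diff field_simps)
    qed simp
    finally show ?thesis .
  qed
  note e4 = L4[OF fin pr]
  have h1: "real M * real (totient (rad L)) / real (rad L) = real M * (\<Prod>p\<in>P. 1 - 1/real p)"
    using tot by (metis times_divide_eq_right)
  have h2: "real_of_int (chi M) * 2 ^ card P * (if \<forall>p\<in>P. \<not> [p = 1] (mod 3) then 1 else 0)
      = real_of_int (chi M) * (\<Prod>p\<in>P. 1 - real_of_int (chi p))"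
    using e4 by (simp only: mult.assoc)
  show ?thesis
    unfolding JC pfr Legendre3[OF assms(2)] h1 h2 main[symmetric] by simp
qed

end
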